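(* Under the standing assumptions, let $u\in X\setminus\{0\}$ and $\zeta\in X^*$. Then $u$ is a $p$-eigenvector of $J$ with subgradient $\zeta$ (and eigenvalue $\lambda=R(u)$) if and only if all of the following hold: (i) $\zeta\in\partial J(u)$; (ii) $\langle\zeta,u-v\rangle\ge0$ for all $v\in X$ with $|v|_H\le|u|_H$; (iii) $|\zeta|_{H^*}\,|u|_H=pJ(u)$. Moreover, condition (ii) implies $\langle\zeta,u\rangle=|\zeta|_{H^*}|u|_H$.
   Context: Standing assumptions: $X$ is a real reflexive Banach space with dual $X^*$ and duality pairing $\langle\cdot,\cdot\rangle$; $\Gamma_0(X)$ is the class of proper, lower semi-continuous, convex functionals $X\to\mathbb{R}\cup\{+\infty\}$. Fix $1<p<\infty$ and $q=\frac{p}{p-1}$. Let $J\in\Gamma_0(X)$, and let $H\in\Gamma_0(X)$ be absolutely $p$-homogeneous ($H(tu)=|t|^pH(u)$) such that $|u|_H:=(pH(u))^{1/p}$ is a norm on $X$, so $H(u)=\frac1p|u|_H^p$. The dual norm is $|\zeta|_{H^*}=\sup_{u\ne0}\langle\zeta,u\rangle/|u|_H$, and $H^*(\zeta)=\frac1q|\zeta|_{H^*}^q$. The subdifferential is $\partial J(u)=\{\zeta\in X^*:\ J(u)+\langle\zeta,v-u\rangle\le J(v)\ \forall v\in X\}$. Growth assumption: there is $c>0$ with $H(u)\le cJ(u)$ for all $u\in X$. The Rayleigh quotient is $R(u)=J(u)/H(u)$ for $u\ne0$. A $p$-eigenvector of $J$: $u\in X\setminus\{0\}$ with subgradient $\zeta\in\partial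 J(u)$ and eigenvalue $\lambda=R(u)\in\mathbb{R}$ such that $\zeta\in\lambda\,\partial H(u)$. *)

theory Defs
  imports "HOL-Analysis.Analysis"
begin

text \<open>The real Banach space X is a type 'a of class banach; its dual X* is the
type of bounded linear functionals ('a \<Rightarrow>L real); the duality pairing is
blinfun_apply.\<close>

definition reflexive_space :: "'a::real_normed_vector itself \<Rightarrow> bool" where
  "reflexive_space _ \<longleftrightarrow>
     (\<forall>\<Phi> :: ('a \<Rightarrow>\<^sub>L real) \<Rightarrow>\<^sub>L real. \<exists>x::'a.
        \<forall>f. blinfun_apply \<Phi> f = blinfun_apply f x)"

definition proper_fun :: "('a \<Rightarrow> ereal) \<Rightarrow> bool" where
  "proper_fun J \<longleftrightarrow> (\<forall>x. J x \<noteq> -\<infinity>) \<and> (\<exists>x. J x \<noteq> \<infinity>)"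

definition lsc_fun :: "('a::topological_space \<Rightarrow> ereal) \<Rightarrow> bool" where
  "lsc_fun J \<longleftrightarrow> (\<forall>x t. t < J x \<longrightarrow> (\<forall>\<^sub>F y in nhds x. t < J y))"

definition convex_fun :: "('a::real_vector \<Rightarrow> ereal) \<Rightarrow> bool" where
  "convex_fun J \<longleftrightarrow> (\<forall>x y t. 0 \<le> t \<and> t \<le> 1 \<longrightarrow>
      J (t *\<^sub>R x + (1 - t) *\<^sub>R y) \<le> ereal t * J x + ereal (1 - t) * J y)"

definition Gamma0 :: "('a::real_normed_vector \<Rightarrow> ereal) \<Rightarrow> bool" where
  "Gamma0 J \<longleftrightarrow> proper_fun J \<and> lsc_fun J \<and> convex_fun J"

definition is_norm_on :: "('a::real_vector \<Rightarrow> real) \<Rightarrow> bool" where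
  "is_norm_on N \<longleftrightarrow> (\<forall>x. N x = 0 \<longleftrightarrow> x = 0) \<and> (\<forall>x y. N (x + y) \<le> N x + N y)
     \<and> (\<forall>c x. N (c *\<^sub>R x) = \<bar>c\<bar> * N x)"

definition subdiff :: "('a::real_normed_vector \<Rightarrow> ereal) \<Rightarrow> 'a \<Rightarrow> ('a \<Rightarrow>\<^sub>L real) set" where
  "subdiff J u = {\<zeta>. \<forall>v. J u + ereal (blinfun_apply \<zeta> (v - u)) \<le> J v}"

definition Hnorm :: "real \<Rightarrow> ('a \<Rightarrow> real) \<Rightarrow> 'a \<Rightarrow> real" where
  "Hnorm p H u = (p * H u) powr (1 / p)"

definition Hdualnorm :: "real \<Rightarrow> ('a::real_normed_vector \<Rightarrow> real) \<Rightarrow> ('a \<Rightarrow>\<^sub>L real) \<Rightarrow> ereal" where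
  "Hdualnorm p H \<zeta> = (SUP u \<in> - {0}. ereal (blinfun_apply \<zeta> u / Hnorm p H u))"

definition Rayleigh :: "('a \<Rightarrow> ereal) \<Rightarrow> ('a \<Rightarrow> real) \<Rightarrow> 'a \<Rightarrow> ereal" where
  "Rayleigh J H u = J u / ereal (H u)"

definition p_eigenvector :: "('a::real_normed_vector \<Rightarrow> ereal) \<Rightarrow> ('a \<Rightarrow> real) \<Rightarrow> 'a \<Rightarrow> ('a \<Rightarrow>\<^sub>L real) \<Rightarrow> bool" where
  "p_eigenvector J H u \<zeta> \<longleftrightarrow> u \<noteq> 0 \<and> \<zeta> \<in> subdiff J u \<and>
     (\<exists>lam::real. Rayleigh J H u = ereal lam \<and> \<zeta> \<in> (\<lambda>\<eta>. lam *\<^sub>R \<eta>) ` subdiff (\<lambda>x. ereal (H x)) u)"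

end

theory Submission
  imports Defs
begin

lemma H_zero:
  fixes H :: "'a::real_vector \<Rightarrow> real"
  assumes Hhom: "\<forall>t x. H (t *\<^sub>R x) = \<bar>t\<bar> powr p * H x"
  shows "H 0 = 0"
  using Hhom[rule_format, of 0 0] by simp

lemma H_nonneg:
  fixes H :: "'a::real_normed_vector \<Rightarrow> real"
  assumes H: "Gamma0 (\<lambda>x. ereal (H x))"
    and Hhom: "\<forall>t x. H (t *\<^sub>R x) = \<bar>t\<bar> powr p * H x"
  shows "H x \<ge> 0"
proof -
  have c: "convex_fun (\<lambda>x. ereal (H x))" using H by (simp add: Gamma0_def)
  have "ereal (H ((1/2) *\<^sub>R x + (1 - 1/2) *\<^sub>R (-x))) \<le> ereal (1/2) * ereal (H x) + ereal (1 - 1/2) * ereal (H (-x))"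
    using c unfolding convex_fun_def by (erule_tac x=x in allE, erule_tac x="-x" in allE, erule_tac x="1/2" in allE) simp
  moreover have "H (-x) = H x" using Hhom[rule_format, of "-1" x] by simp
  moreover have "(1/2) *\<^sub>R x + (1 - 1/2) *\<^sub>R (-x) = (0::'a)" by (simp add: algebra_simps)
  ultimately have "H 0 \<le> H x" by simp
  with H_zero[OF Hhom] show ?thesis by simp
qed

lemma H_eq:
  assumes p: "1 < p" and nn: "H x \<ge> 0"
  shows "H x = Hnorm p H x powr p / p"
proof -
  have "Hnorm p H x powr p = (p * H x) powr (1/p * p)"
    unfolding Hnorm_def using p nn by (simp add: powr_powr)
  also have "\<dots> = p * H x" using p nn by simp
  finally show ?thesis using p by simp
qed

lemma key_dual:
  fixes N :: "'a::real_normed_vector \<Rightarrow> real" and \<zeta> :: "'a \<Rightarrow>\<^sub>L real"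
  assumes N: "is_norm_on N" and u: "u \<noteq> 0"
    and ii: "\<forall>v. N v \<le> N u \<longrightarrow> blinfun_apply \<zeta> (u - v) \<ge> 0"
  shows "\<And>v. blinfun_apply \<zeta> v * N u \<le> blinfun_apply \<zeta> u * N v"
    and "(SUP v \<in> - {0}. ereal (blinfun_apply \<zeta> v / N v)) = ereal (blinfun_apply \<zeta> u / N u)"
proof -
  have N0: "\<And>x. N x = 0 \<longleftrightarrow> x = 0" and Ns: "\<And>c x. N (c *\<^sub>R x) = \<bar>c\<bar> * N x"
    using N by (auto simp: is_norm_on_def)
  have Nnn: "\<And>x. N x \<ge> 0"
  proof -
    fix x
    have "N (x + (-1) *\<^sub>R x) \<le> N x + N ((-1) *\<^sub>R x)" using N unfolding is_norm_on_def by blast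
    then show "N x \<ge> 0" using Ns[of "-1" x] N0[of 0] by simp
  qed
  have Nu: "N u > 0" using N0[of u] Nnn[of u] u by simp
  show A: "blinfun_apply \<zeta> v * N u \<le> blinfun_apply \<zeta> u * N v" for v
  proof (cases "v = 0")
    case True then show ?thesis using N0[of 0] by (simp add: blinfun.zero_right)
  next
    case False
    then have Nv: "N v > 0" using N0[of v] Nnn[of v] by simp
    define w where "w = (N u / N v) *\<^sub>R v"
    have "N w = N u" unfolding w_def using Ns Nv Nu by simp
    then have "blinfun_apply \<zeta> (u - w) \<ge> 0" using ii by simp
    then have "(N u / N v) * blinfun_apply \<zeta> v \<le> blinfun_apply \<zeta> u"
      unfolding w_def by (simp add: blinfun.diff_right blinfun.scaleR_right)
    then show ?thesis using Nv by (simp add: field_simps)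
  qed
  show "(SUP v \<in> - {0}. ereal (blinfun_apply \<zeta> v / N v)) = ereal (blinfun_apply \<zeta> u / N u)"
  proof (rule antisym)
    show "(SUP v \<in> - {0}. ereal (blinfun_apply \<zeta> v / N v)) \<le> ereal (blinfun_apply \<zeta> u / N u)"
    proof (rule SUP_least)
      fix v :: 'a assume "v \<in> - {0}"
      then have Nv: "N v > 0" using N0[of v] Nnn[of v] by simp
      show "ereal (blinfun_apply \<zeta> v / N v) \<le> ereal (blinfun_apply \<zeta> u / N u)"
        using A[of v] Nv Nu by (simp add: divide_simps mult.commute)
    qed
    show "ereal (blinfun_apply \<zeta> u / N u) \<le> (SUP v \<in> - {0}. ereal (blinfun_apply \<zeta> v / N v))"
      using u by (intro SUP_upper) simp
  qed
qed


theorem proposition2p5: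
  fixes J :: "'a::banach \<Rightarrow> ereal" and H :: "'a \<Rightarrow> real" and p q c :: real
    and u :: 'a and \<zeta> :: "'a \<Rightarrow>\<^sub>L real"
  assumes refl: "reflexive_space TYPE('a)"
    and p: "1 < p" and q: "q = p / (p - 1)"
    and J: "Gamma0 J"
    and H: "Gamma0 (\<lambda>x. ereal (H x))"
    and Hhom: "\<forall>t x. H (t *\<^sub>R x) = \<bar>t\<bar> powr p * H x"
    and Hnorm: "is_norm_on (Hnorm p H)"
    and growth: "c > 0" "\<forall>x. ereal (H x) \<le> ereal c * J x"
    and u: "u \<noteq> 0"
  shows "(p_eigenvector J H u \<zeta> \<longleftrightarrow>
            \<zeta> \<in> subdiff J u
          \<and> (\<forall>v. Hnorm p H v \<le> Hnorm p H u \<longrightarrow> blinfun_apply \<zeta> (u - v) \<ge> 0)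
          \<and> Hdualnorm p H \<zeta> * ereal (Hnorm p H u) = ereal p * J u)
       \<and> ((\<forall>v. Hnorm p H v \<le> Hnorm p H u \<longrightarrow> blinfun_apply \<zeta> (u - v) \<ge> 0)
            \<longrightarrow> ereal (blinfun_apply \<zeta> u) = Hdualnorm p H \<zeta> * ereal (Hnorm p H u))"
proof -
  have Hnn: "\<And>x. H x \<ge> 0" using H_nonneg[OF H Hhom] .
  have Heq: "\<And>x. H x = Hnorm p H x powr p / p" using H_eq[OF p, of H] Hnn by blast
  have N0: "\<And>x. Hnorm p H x = 0 \<longleftrightarrow> x = 0" using Hnorm by (simp add: is_norm_on_def)
  have Nnn: "\<And>x. Hnorm p H x \<ge> 0" unfolding Hnorm_def by simp
  have Nu: "Hnorm p H u > 0" using N0[of u] Nnn[of u] u by simp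
  have Hu: "H u > 0" using Heq[of u] Nu p by simp
  have Jprop: "\<And>x. J x \<noteq> -\<infinity>" using J by (simp add: Gamma0_def proper_fun_def)
  have MO: "(\<forall>v. Hnorm p H v \<le> Hnorm p H u \<longrightarrow> blinfun_apply \<zeta> (u - v) \<ge> 0)
            \<longrightarrow> ereal (blinfun_apply \<zeta> u) = Hdualnorm p H \<zeta> * ereal (Hnorm p H u)"
  proof
    assume ii: "\<forall>v. Hnorm p H v \<le> Hnorm p H u \<longrightarrow> blinfun_apply \<zeta> (u - v) \<ge> 0"
    have "Hdualnorm p H \<zeta> = ereal (blinfun_apply \<zeta> u / Hnorm p H u)"
      unfolding Hdualnorm_def using key_dual(2)[OF Hnorm u ii] .
    then show "ereal (blinfun_apply \<zeta> u) = Hdualnorm p H \<zeta> * ereal (Hnorm p H u)"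
      using Nu by simp
  qed
  have EQ: "p_eigenvector J H u \<zeta> \<longleftrightarrow>
            \<zeta> \<in> subdiff J u
          \<and> (\<forall>v. Hnorm p H v \<le> Hnorm p H u \<longrightarrow> blinfun_apply \<zeta> (u - v) \<ge> 0)
          \<and> Hdualnorm p H \<zeta> * ereal (Hnorm p H u) = ereal p * J u"
  proof
    assume eig: "p_eigenvector J H u \<zeta>"
    then have i: "\<zeta> \<in> subdiff J u" by (simp add: p_eigenvector_def)
    from eig obtain lam \<eta> where R: "Rayleigh J H u = ereal lam"
      and eta: "\<eta> \<in> subdiff (\<lambda>x. ereal (H x)) u" and ze: "\<zeta> = lam *\<^sub>R \<eta>"
      unfolding p_eigenvector_def by blast
    obtain j where j: "J u = ereal j"
    proof (cases "J u")
      case (real r) then show ?thesis using that by simp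
    next
      case PInf then show ?thesis using R Hu by (simp add: Rayleigh_def)
    next
      case MInf then show ?thesis using Jprop by simp
    qed
    have lamj: "lam = j / H u" using R j Hu by (simp add: Rayleigh_def)
    have "H u \<le> c * j" using growth(2)[rule_format, of u] j by simp
    then have "0 < c * j" using Hu by linarith
    then have jpos: "j > 0" using growth(1) by (simp add: zero_less_mult_iff)
    have lampos: "lam > 0" using lamj jpos Hu by simp
    have sub: "\<And>v. H u + blinfun_apply \<eta> (v - u) \<le> H v"
      using eta by (simp add: subdiff_def)
    have etau: "blinfun_apply \<eta> u = p * H u"
    proof -
      define f where "f t = (t - 1) * blinfun_apply \<eta> u - (t powr p - 1) * H u" for t
      have der: "DERIV f 1 :> (1 * blinfun_apply \<eta> u - (p * 1 powr (p - 1)) * H u)"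
      proof -
        have d1: "((\<lambda>t. (t - 1) * blinfun_apply \<eta> u) has_real_derivative (1 * blinfun_apply \<eta> u)) (at 1)"
          by (intro DERIV_cmult_right) (auto intro!: derivative_eq_intros)
        have "((\<lambda>t. t powr p - 1) has_real_derivative (p * 1 powr (p - 1) - 0)) (at 1)"
          by (intro DERIV_diff has_real_derivative_powr DERIV_const) simp
        then have d2: "((\<lambda>t. (t powr p - 1) * H u) has_real_derivative (p * 1 powr (p - 1) * H u)) (at 1)"
          using DERIV_cmult_right by fastforce
        show ?thesis unfolding f_def using DERIV_diff[OF d1 d2] by simp
      qed
      have "\<forall>t. \<bar>1 - t\<bar> < 1 \<longrightarrow> f t \<le> f 1"
      proof (intro allI impI)
        fix t :: real assume "\<bar>1 - t\<bar> < 1"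
        then have t: "t > 0" by simp
        have "H u + blinfun_apply \<eta> (t *\<^sub>R u - u) \<le> H (t *\<^sub>R u)" using sub .
        then have "H u + (t - 1) * blinfun_apply \<eta> u \<le> t powr p * H u"
          using Hhom t by (simp add: blinfun.diff_right blinfun.scaleR_right algebra_simps)
        then show "f t \<le> f 1" unfolding f_def by (simp add: algebra_simps)
      qed
      from DERIV_local_max[OF der _ this] show ?thesis by simp
    qed
    have etav: "blinfun_apply \<eta> v \<le> blinfun_apply \<eta> u" if "Hnorm p H v \<le> Hnorm p H u" for v
    proof -
      have "Hnorm p H v powr p \<le> Hnorm p H u powr p"
        using that Nnn p by (intro powr_mono2) auto
      then have "H v \<le> H u" using Heq[of u] Heq[of v] p by (simp add: divide_right_mono)
      moreover have "H u + blinfun_apply \<eta> v - blinfun_apply \<eta> u \<le> H v"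
        using sub[of v] by (simp add: blinfun.diff_right)
      ultimately show ?thesis using etau Hnn[of u] p
        by (smt (verit, ccfv_SIG) mult_le_cancel_right1)
    qed
    have ii: "\<forall>v. Hnorm p H v \<le> Hnorm p H u \<longrightarrow> blinfun_apply \<zeta> (u - v) \<ge> 0"
      using etav lampos unfolding ze by (simp add: blinfun.diff_right blinfun.scaleR_left)
    have "Hdualnorm p H \<zeta> * ereal (Hnorm p H u) = ereal (blinfun_apply \<zeta> u)"
      using MO ii by simp
    also have "\<dots> = ereal (p * j)" using ze etau lamj Hu by (simp add: blinfun.scaleR_left)
    finally show "\<zeta> \<in> subdiff J u
          \<and> (\<forall>v. Hnorm p H v \<le> Hnorm p H u \<longrightarrow> blinfun_apply \<zeta> (u - v) \<ge> 0)
          \<and> Hdualnorm p H \<zeta> * ereal (Hnorm p H u) = ereal p * J u"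
      using i ii j by simp
  next
    assume A: "\<zeta> \<in> subdiff J u
          \<and> (\<forall>v. Hnorm p H v \<le> Hnorm p H u \<longrightarrow> blinfun_apply \<zeta> (u - v) \<ge> 0)
          \<and> Hdualnorm p H \<zeta> * ereal (Hnorm p H u) = ereal p * J u"
    then have i: "\<zeta> \<in> subdiff J u"
      and ii: "\<forall>v. Hnorm p H v \<le> Hnorm p H u \<longrightarrow> blinfun_apply \<zeta> (u - v) \<ge> 0"
      and iii: "Hdualnorm p H \<zeta> * ereal (Hnorm p H u) = ereal p * J u" by auto
    have e1: "ereal (blinfun_apply \<zeta> u) = ereal p * J u" using MO ii iii by simp
    define j where "j = blinfun_apply \<zeta> u / p"
    have j: "J u = ereal j"
    proof (cases "J u")
      case (real r) then show ?thesis using e1 p unfolding j_def by simp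
    next
      case PInf then show ?thesis using e1 p by simp
    next
      case MInf then show ?thesis using Jprop by simp
    qed
    have "H u \<le> c * j" using growth(2)[rule_format, of u] j by simp
    then have "0 < c * j" using Hu by linarith
    then have jpos: "j > 0" using growth(1) by (simp add: zero_less_mult_iff)
    define lam where "lam = j / H u"
    have lampos: "lam > 0" using jpos Hu unfolding lam_def by simp
    define \<eta> where "\<eta> = (1 / lam) *\<^sub>R \<zeta>"
    define a where "a = Hnorm p H u"
    have zu: "blinfun_apply \<zeta> u = lam * a powr p"
      using Heq[of u] p Hu Nu unfolding lam_def j_def a_def by (simp add: field_simps)
    have ap: "a powr p = a powr (p - 1) * a" using Nu unfolding a_def
      by (simp add: powr_diff)
    have "\<eta> \<in> subdiff (\<lambda>x. ereal (H x)) u"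
      unfolding subdiff_def
    proof (intro CollectI allI)
      fix v
      define b where "b = Hnorm p H v"
      have zv: "blinfun_apply \<zeta> v * a \<le> blinfun_apply \<zeta> u * b"
        using key_dual(1)[OF Hnorm u ii] unfolding a_def b_def .
      have "blinfun_apply \<zeta> v \<le> lam * (a powr (p - 1) * b)"
      proof -
        have "blinfun_apply \<zeta> v * a \<le> (lam * (a powr (p - 1) * b)) * a"
          using zv zu ap by (simp add: algebra_simps)
        then show ?thesis using Nu unfolding a_def by simp
      qed
      then have etav: "blinfun_apply \<eta> v \<le> a powr (p - 1) * b"
        unfolding \<eta>_def using lampos by (simp add: blinfun.scaleR_left field_simps)
      have etau: "blinfun_apply \<eta> u = a powr p"
        unfolding \<eta>_def using lampos zu by (simp add: blinfun.scaleR_left)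
      have qq1: "q > 1" unfolding q using p by (simp add: field_simps)
      have "1/p + 1/q = 1/p + (p - 1)/p" unfolding q using p by simp
      also have "\<dots> = 1" using p by (simp add: field_simps)
      finally have qq: "q > 1" "1/p + 1/q = 1" using qq1 by auto
      have Y: "b * a powr (p - 1) \<le> b powr p / p + (a powr (p - 1)) powr q / q"
        using Youngs_inequality[OF p qq(1) qq(2)] Nnn unfolding a_def b_def by simp
      have "(a powr (p - 1)) powr q = a powr p"
        using p q by (simp add: powr_powr)
      with Y have Y2: "b * a powr (p - 1) \<le> b powr p / p + a powr p / q" by simp
      have "a powr p / q = a powr p * (1/q)" by simp
      also have "\<dots> = a powr p * (1 - 1/p)" using qq(2) by (metis add_diff_cancel_left')
      also have "\<dots> = a powr p - a powr p / p" by (simp add: algebra_simps)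
      finally have "a powr p / q = a powr p - a powr p / p" .
      with Y2 have Y3: "b * a powr (p - 1) \<le> b powr p / p + a powr p - a powr p / p" by simp
      have "H u + blinfun_apply \<eta> (v - u) \<le> H v"
        using etav etau Y3 Heq[of u] Heq[of v] unfolding a_def b_def
        by (simp add: blinfun.diff_right algebra_simps)
      then show "ereal (H u) + ereal (blinfun_apply \<eta> (v - u)) \<le> ereal (H v)" by simp
    qed
    moreover have "\<zeta> = lam *\<^sub>R \<eta>" unfolding \<eta>_def using lampos by simp
    moreover have "Rayleigh J H u = ereal lam" using j Hu unfolding Rayleigh_def lam_def by simp
    ultimately show "p_eigenvector J H u \<zeta>" unfolding p_eigenvector_def using u i by blast
  qed
  show ?thesis using EQ MO by blast
qed

end
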